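(* Consider Algorithm 3 (see context) run on any arrival sequence, and let $C_{\min}=\min_l C_l$. Whenever a packet $m$ is scheduled, let $\Delta D$ be the resulting increase in the dual objective $\sum_{m'}\alpha_{m'}+\sum_{l,t}C_l\beta_{lt}$, which increases by $\alpha_m$ plus the changes in $C_l\beta_{lt}$ for $(l,t)\in k^*$. The corresponding increase of the primal objective $\sum_{m,k}X_{mk}$ is $1$. Then $$\Delta D\le 2(\ln L+1)+\frac{B}{C_{\min}},$$ where $B<\infty$ is a constant that depends on $L$ but not on $C_{\min}$.
   Context: Network model. The network is a directed graph with a finite set $\mathcal L$ of links. Each link $l$ has an integer capacity $C_l\ge1$ (packets per time slot). Time is slotted, $t=1,2,\dots$. $\mathcal M$ is a finite set of packets. Packet $m$ has a source node $s_m$, a destination node $\mathrm{dst}_m$, an arrival slot $a_m$ and a deadline slot $f_m$. Valid schedules. A valid schedule for $m$ is a set $k=\{(l_1,t_1),\dots,(l_j,t_j)\}$ of (link, slot) pairs satisfying two conditions: $l_1,\dots,l_j$ form a directed path from $s_m$ to $\mathrm{dst}_m$, and $a_m\le t_1<t_2<\dots<t_j\le f_m$. $V(m)$ denotes the set of valid schedules of $m$. $L\ge1$ is an integer with $|k|\le L$ for all $m\in\mathcal M$, $k\in V(m)$. Define the function $$g_L(x)=\begin{cases}\dfrac{e^{x}-1}{L\,(e^{1/(\ln L+1)}-1)}, & 0\le x\le \frac{1}{\ln L+1},\\[2mm] e^{(x-1)(\ln L+1)}, & x\ge\frac{1}{\ln L+1}.\end{cases}$$ Algorithm 3. 1. Initialize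 all $\alpha_m,X_{mk}$ to $0$. For each link $l$ and slot $t$, let $n_{lt}$ be the number of packets scheduled so far on $(l,t)$ (initially $0$), and maintain $\beta_{lt}=g_L(n_{lt}/C_l)$ (initially $0$). 2. For each arriving packet $m$ in order: - Let $k^*\in\arg\max_{k\in V(m)}\big(1-\sum_{(l,t)\in k}\beta_{lt}\big)$. - If $1-\sum_{(l,t)\in k^*}\beta_{lt}>0$, do the following. Set $\alpha_m=1-\sum_{(l,t)\in k^*}\beta_{lt}$, using current values. For each $(l,t)\in k^*$ increment $n_{lt}$ by one and reset $\beta_{lt}=g_L(n_{lt}/C_l)$. Set $X_{mk^*}=1$, and transmit $m$ along $k^*$. - Otherwise, drop $m$. *)

theory Defs
  imports Complex_Main
begin

(* Links are identified by natural numbers; link l goes from vertex lsrc l to vertex ldst l.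
   Vertices are natural numbers.  A packet is (source, destination, arrival slot, deadline slot). *)
type_synonym packet = "nat \<times> nat \<times> nat \<times> nat"

definition pk_src :: "packet \<Rightarrow> nat" where "pk_src p = fst p"
definition pk_dst :: "packet \<Rightarrow> nat" where "pk_dst p = fst (snd p)"
definition pk_arr :: "packet \<Rightarrow> nat" where "pk_arr p = fst (snd (snd p))"
definition pk_dl  :: "packet \<Rightarrow> nat" where "pk_dl p = snd (snd (snd p))"

definition gL :: "nat \<Rightarrow> real \<Rightarrow> real" where
  "gL L x = (if x \<le> 1 / (ln (real L) + 1)
             then (exp x - 1) / (real L * (exp (1 / (ln (real L) + 1)) - 1))
             else exp ((x - 1) * (ln (real L) + 1)))"

definition is_dpath :: "nat set \<Rightarrow> (nat \<Rightarrow> nat) \<Rightarrow> (nat \<Rightarrow> nat) \<Rightarrow> nat \<Rightarrow> nat \<Rightarrow> nat list \<Rightarrow> bool" where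
  "is_dpath Ls lsrc ldst s d ls \<longleftrightarrow>
     ls \<noteq> [] \<and> set ls \<subseteq> Ls \<and> lsrc (hd ls) = s \<and> ldst (last ls) = d \<and>
     (\<forall>i. Suc i < length ls \<longrightarrow> ldst (ls ! i) = lsrc (ls ! Suc i)) \<and>
     distinct (s # map ldst ls)"

definition valid_scheds :: "nat set \<Rightarrow> (nat \<Rightarrow> nat) \<Rightarrow> (nat \<Rightarrow> nat) \<Rightarrow> packet \<Rightarrow> (nat \<times> nat) set set" where
  "valid_scheds Ls lsrc ldst p =
     {k. \<exists>ls ts. length ts = length ls \<and> is_dpath Ls lsrc ldst (pk_src p) (pk_dst p) ls \<and>
                 sorted_wrt (<) ts \<and> (\<forall>t\<in>set ts. pk_arr p \<le> t \<and> t \<le> pk_dl p) \<and>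
                 k = set (zip ls ts)}"

definition beta :: "nat \<Rightarrow> (nat \<Rightarrow> nat) \<Rightarrow> (nat \<Rightarrow> nat \<Rightarrow> nat) \<Rightarrow> nat \<Rightarrow> nat \<Rightarrow> real" where
  "beta L C n l t = gL L (real (n l t) / real (C l))"

definition sched_value :: "nat \<Rightarrow> (nat \<Rightarrow> nat) \<Rightarrow> (nat \<Rightarrow> nat \<Rightarrow> nat) \<Rightarrow> (nat \<times> nat) set \<Rightarrow> real" where
  "sched_value L C n k = 1 - (\<Sum>(l,t)\<in>k. beta L C n l t)"

definition incr :: "(nat \<Rightarrow> nat \<Rightarrow> nat) \<Rightarrow> (nat \<times> nat) set \<Rightarrow> (nat \<Rightarrow> nat \<Rightarrow> nat)" where
  "incr n k = (\<lambda>l t. if (l, t) \<in> k then Suc (n l t) else n l t)"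

(* alg_reach ... ps n : after Algorithm 3 has processed the packets ps (in order, with some
   admissible tie-breaking in the argmax), the counters are n. *)
inductive alg_reach :: "nat \<Rightarrow> nat set \<Rightarrow> (nat \<Rightarrow> nat) \<Rightarrow> (nat \<Rightarrow> nat) \<Rightarrow> (nat \<Rightarrow> nat)
                        \<Rightarrow> packet list \<Rightarrow> (nat \<Rightarrow> nat \<Rightarrow> nat) \<Rightarrow> bool"
  for L Ls lsrc ldst C where
  init: "alg_reach L Ls lsrc ldst C [] (\<lambda>l t. 0)"
| sched: "alg_reach L Ls lsrc ldst C ps n \<Longrightarrow> k \<in> valid_scheds Ls lsrc ldst p \<Longrightarrow>
          (\<forall>k'\<in>valid_scheds Ls lsrc ldst p. sched_value L C n k' \<le> sched_value L C n k) \<Longrightarrow>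
          sched_value L C n k > 0 \<Longrightarrow>
          alg_reach L Ls lsrc ldst C (ps @ [p]) (incr n k)"
| drop: "alg_reach L Ls lsrc ldst C ps n \<Longrightarrow>
          \<not> (\<exists>k\<in>valid_scheds Ls lsrc ldst p. sched_value L C n k > 0) \<Longrightarrow>
          alg_reach L Ls lsrc ldst C (ps @ [p]) n"

(* increase of the dual objective when scheduling along k with counters n:
   alpha_m plus the changes of C_l beta_{lt} for (l,t) in k *)
definition dual_increase :: "nat \<Rightarrow> (nat \<Rightarrow> nat) \<Rightarrow> (nat \<Rightarrow> nat \<Rightarrow> nat) \<Rightarrow> (nat \<times> nat) set \<Rightarrow> real" where
  "dual_increase L C n k = sched_value L C n k +
     (\<Sum>(l,t)\<in>k. real (C l) * (beta L C (incr n k) l t - beta L C n l t))"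

end

theory Submission
  imports Defs
begin

lemma expq: assumes "(0::real) \<le> y" shows "exp y - 1 \<le> y + y^2 * exp y"
proof -
  have "1 - y \<le> exp (-y)" using exp_ge_add_one_self[of "-y"] by simp
  hence "exp y * (1 - y) \<le> exp y * exp (-y)" by (simp add: mult_left_mono)
  hence h: "exp y * (1 - y) \<le> 1" by (simp add: exp_minus_inverse)
  have "exp y * (1 - y) * (1 + y) \<le> 1 * (1 + y)" by (rule mult_right_mono) (use h assms in auto)
  thus ?thesis by (simp add: algebra_simps power2_eq_square)
qed

lemma gL_basics:
  fixes L :: nat
  assumes "L \<ge> 1"
  defines "c \<equiv> ln (real L) + 1"
  defines "a \<equiv> 1 / c"
  defines "D \<equiv> real L * (exp a - 1)"
  shows "c \<ge> 1" "0 < a" "a \<le> 1" "D > 0" "1 / D \<le> c / real L"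
    "exp ((a - 1) * c) = 1 / real L"
proof -
  show c1: "c \<ge> 1" using assms by (simp add: c_def)
  show a0: "0 < a" using c1 by (simp add: a_def)
  show "a \<le> 1" using c1 by (simp add: a_def)
  have ea: "exp a - 1 \<ge> a" using exp_ge_add_one_self[of a] by linarith
  show D0: "D > 0" using a0 ea assms by (simp add: D_def)
  have "1 \<le> c * (exp a - 1)" using mult_left_mono[OF ea, of c] c1 by (simp add: a_def)
  thus "1 / D \<le> c / real L" using D0 assms c1
    by (simp add: D_def divide_simps) (simp add: algebra_simps)
  have "(a - 1) * c = - ln (real L)" using c1 by (simp add: a_def c_def algebra_simps)
  thus "exp ((a - 1) * c) = 1 / real L" using assms by (simp add: exp_minus inverse_eq_divide)
qed

lemma step_bound:
  fixes L :: nat and C x :: real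
  assumes L: "L \<ge> 1" and C: "C \<ge> 1" and x: "x \<ge> 0" and gx: "gL L x \<le> 1"
  shows "C * (gL L (x + 1/C) - gL L x) \<le> (ln (real L) + 1) * gL L x + (ln (real L) + 1) / real L
          + ((2 + ln (real L)) * exp 1 + (ln (real L) + 1)^2 * exp (ln (real L) + 1)) / C"
proof -
  define c where "c = ln (real L) + 1"
  define a where "a = 1 / c"
  define D where "D = real L * (exp a - 1)"
  define h where "h = 1 / C"
  define K where "K = (1 + c) * exp 1 + c^2 * exp c"
  note bs = gL_basics[OF L, folded c_def, folded a_def, folded D_def]
  have c1: "c \<ge> 1" and a0: "0 < a" and D0: "D > 0" and iD: "1 / D \<le> c / real L"
    and ea: "exp ((a - 1) * c) = 1 / real L" using bs by auto
  have h0: "0 < h" and h1: "h \<le> 1" and Ch: "C * h = 1" using C by (auto simp: h_def)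
  have G1: "gL L y = (exp y - 1) / D" if "y \<le> a" for y
    using that by (simp add: gL_def a_def c_def D_def)
  have G2: "gL L y = exp ((y - 1) * c)" if "y > a" for y
    using that by (simp add: gL_def a_def c_def)
  have cL: "c / real L \<le> c" using L c1 by (simp add: divide_simps)
  have iDc: "1 / D \<le> c" using iD cL by linarith
  have Kh: "K / C = K * h" by (simp add: h_def)
  have e1: "exp y - 1 \<le> y + y^2 * exp 1" if "0 \<le> y" "y \<le> 1" for y :: real
  proof -
    have "y^2 * exp y \<le> y^2 * exp 1" by (rule mult_left_mono) (use that in auto)
    thus ?thesis using expq[OF that(1)] by linarith
  qed
  let ?u = "gL L x"
  have Gu0: "?u \<ge> 0"
  proof (cases "x \<le> a")
    case True thus ?thesis using G1[OF True] D0 x by simp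
  next
    case False thus ?thesis using G2[of x] by simp
  qed
  have main: "C * (gL L (x + h) - ?u) \<le> c * ?u + c / real L + K * h"
  proof (cases "x + h \<le> a")
    case True
    have xa: "x \<le> a" using True h0 by linarith
    have "gL L (x + h) - ?u = (exp x / D) * (exp h - 1)"
      using G1[OF True] G1[OF xa] D0 by (simp add: exp_add field_simps)
    also have "exp x / D = ?u + 1 / D" using G1[OF xa] D0 by (simp add: field_simps)
    finally have eq: "C * (gL L (x + h) - ?u) = (?u + 1 / D) * (C * (exp h - 1))" by simp
    have "C * (exp h - 1) \<le> C * (h + h^2 * exp 1)"
      by (rule mult_left_mono) (use e1[OF _ h1] h0 C in auto)
    also have "\<dots> = 1 + h * exp 1" using Ch by (simp add: power2_eq_square algebra_simps)
    finally have b1: "C * (exp h - 1) \<le> 1 + h * exp 1" .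
    have pos: "?u + 1 / D \<ge> 0" using Gu0 D0 by simp
    have "C * (gL L (x + h) - ?u) \<le> (?u + 1 / D) * (1 + h * exp 1)"
      unfolding eq using b1 pos by (rule mult_left_mono)
    also have "\<dots> = ?u + 1 / D + (?u + 1 / D) * (h * exp 1)" by (simp add: algebra_simps)
    also have "\<dots> \<le> c * ?u + c / real L + (1 + c) * (h * exp 1)"
    proof -
      have "?u \<le> c * ?u" using c1 Gu0 by (simp add: mult_le_cancel_right1)
      moreover have "(?u + 1 / D) * (h * exp 1) \<le> (1 + c) * (h * exp 1)"
        by (rule mult_right_mono) (use gx iDc h0 in auto)
      ultimately show ?thesis using iD by linarith
    qed
    also have "\<dots> \<le> c * ?u + c / real L + K * h"
      using h0 c1 by (simp add: K_def algebra_simps)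
    finally show ?thesis .
  next
    case False
    show ?thesis
    proof (cases "x > a")
      case True
      have v: "x + h > a" using True h0 by linarith
      have "gL L (x + h) = ?u * exp (c * h)"
        using G2[OF v] G2[OF True] by (simp add: exp_add[symmetric] algebra_simps)
      hence eq: "C * (gL L (x + h) - ?u) = ?u * (C * (exp (c * h) - 1))" by (simp add: algebra_simps)
      have ch: "0 \<le> c * h" "c * h \<le> c" using h0 h1 c1 by (auto simp: mult_le_cancel_left1)
      have "exp (c * h) - 1 \<le> c * h + (c * h)^2 * exp c"
      proof -
        have "(c*h)^2 * exp (c*h) \<le> (c*h)^2 * exp c" by (rule mult_left_mono) (use ch in auto)
        thus ?thesis using expq[OF ch(1)] by linarith
      qed
      hence "C * (exp (c * h) - 1) \<le> C * (c * h + (c * h)^2 * exp c)"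
        by (rule mult_left_mono) (use C in auto)
      also have "\<dots> = c*(C*h) + c^2*exp c*h*(C*h)" by (simp add: power2_eq_square algebra_simps)
      also have "\<dots> = c + c^2 * exp c * h" using Ch by simp
      finally have b: "C * (exp (c * h) - 1) \<le> c + c^2 * exp c * h" .
      have "C * (gL L (x + h) - ?u) \<le> ?u * (c + c^2 * exp c * h)"
        unfolding eq using b Gu0 by (rule mult_left_mono)
      also have "\<dots> \<le> c * ?u + c^2 * exp c * h"
      proof -
        have "?u * (c^2 * exp c * h) \<le> 1 * (c^2 * exp c * h)"
          by (rule mult_right_mono) (use gx h0 in auto)
        thus ?thesis by (simp add: algebra_simps)
      qed
      also have "\<dots> \<le> c * ?u + c / real L + K * h"
        using h0 c1 L by (simp add: K_def algebra_simps)
      finally show ?thesis .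
    next
      case False
      hence xa: "x \<le> a" by simp
      have v: "x + h > a" using \<open>\<not> x + h \<le> a\<close> by simp
      define r where "r = a - x"
      define s where "s = x + h - a"
      have r0: "r \<ge> 0" and s0: "s > 0" and rs: "r + s = h" using xa v by (auto simp: r_def s_def)
      have rh: "r \<le> h" and sh: "s \<le> h" using r0 s0 rs by linarith+
      have Ga: "gL L a = 1 / real L" using G1[of a] D0 L a0 by (simp add: D_def)
      have "gL L (x + h) = exp ((a - 1) * c) * exp (c * s)"
        using G2[OF v] by (simp add: exp_add[symmetric] s_def algebra_simps)
      hence Gv: "gL L (x + h) = exp (c * s) / real L" using ea by simp
      have "gL L a - ?u = (exp x / D) * (exp r - 1)"
        using G1[of a] G1[OF xa] D0 by (simp add: r_def exp_add[symmetric] field_simps)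
      also have "exp x / D = ?u + 1 / D" using G1[OF xa] D0 by (simp add: field_simps)
      finally have eq1: "C * (gL L a - ?u) = (?u + 1 / D) * (C * (exp r - 1))" by simp
      have pos: "?u + 1 / D \<ge> 0" using Gu0 D0 by simp
      have "C * r \<le> C * h" by (rule mult_left_mono) (use rh C in auto)
      hence Cr1: "C * r \<le> 1" using Ch by simp
      have "C * s \<le> C * h" by (rule mult_left_mono) (use sh C in auto)
      hence Cs1: "C * s \<le> 1" using Ch by simp
      have "C * (exp r - 1) \<le> C * (r + r^2 * exp 1)"
        by (rule mult_left_mono) (use e1[OF r0] rh h1 C in auto)
      also have "\<dots> \<le> C * r + h * exp 1"
      proof -
        have "C * r^2 \<le> h"
        proof -
          have "C * r^2 = (C * r) * r" by (simp add: power2_eq_square)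
          also have "\<dots> \<le> 1 * h" using Cr1 r0 rh by (intro mult_mono) auto
          finally show ?thesis by simp
        qed
        hence "C * r^2 * exp 1 \<le> h * exp 1" by (auto intro!: mult_right_mono)
        thus ?thesis by (simp add: algebra_simps)
      qed
      finally have b1: "C * (exp r - 1) \<le> C * r + h * exp 1" .
      have p1: "C * (gL L a - ?u) \<le> (?u + 1 / D) * (C * r + h * exp 1)"
        unfolding eq1 using b1 pos by (rule mult_left_mono)
      have "(?u + 1 / D) * (C * r + h * exp 1) = ?u * (C * r) + (1 / D) * (C * r) + (?u + 1 / D) * (h * exp 1)"
        by (simp add: algebra_simps)
      also have "\<dots> \<le> ?u + (c / real L) * (C * r) + (1 + c) * (h * exp 1)"
      proof -
        have "?u * (C * r) \<le> ?u * 1" using Cr1 Gu0 by (rule mult_left_mono)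
        moreover have "(1 / D) * (C * r) \<le> (c / real L) * (C * r)"
          by (rule mult_right_mono) (use iD r0 C in auto)
        moreover have "(?u + 1 / D) * (h * exp 1) \<le> (1 + c) * (h * exp 1)"
          by (rule mult_right_mono) (use gx iDc h0 in auto)
        ultimately show ?thesis by linarith
      qed
      finally have P1: "C * (gL L a - ?u) \<le> ?u + (c / real L) * (C * r) + (1 + c) * (h * exp 1)"
        using p1 by linarith
      have cs: "0 \<le> c * s" "c * s \<le> c" using s0 sh h1 c1 by (auto simp: mult_le_cancel_left1)
      have "exp (c * s) - 1 \<le> c * s + (c * s)^2 * exp c"
      proof -
        have "(c*s)^2 * exp (c*s) \<le> (c*s)^2 * exp c" by (rule mult_left_mono) (use cs in auto)
        thus ?thesis using expq[OF cs(1)] by linarith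
      qed
      hence "C * (exp (c * s) - 1) \<le> C * (c * s + (c * s)^2 * exp c)"
        by (rule mult_left_mono) (use C in auto)
      also have "\<dots> \<le> c * (C * s) + c^2 * exp c * h"
      proof -
        have "C * s^2 \<le> h"
        proof -
          have "C * s^2 = (C * s) * s" by (simp add: power2_eq_square)
          also have "\<dots> \<le> 1 * h" using Cs1 s0 sh by (intro mult_mono) auto
          finally show ?thesis by simp
        qed
        hence "C * s^2 * (c^2 * exp c) \<le> h * (c^2 * exp c)" by (auto intro!: mult_right_mono)
        thus ?thesis by (simp add: power2_eq_square algebra_simps)
      qed
      finally have b2: "C * (exp (c * s) - 1) \<le> c * (C * s) + c^2 * exp c * h" .
      have "C * (gL L (x + h) - gL L a) = C * (exp (c * s) - 1) / real L"
        using Gv Ga by (simp add: diff_divide_distrib right_diff_distrib)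
      also have "\<dots> \<le> (c * (C * s) + c^2 * exp c * h) / real L"
        using b2 L by (intro divide_right_mono) auto
      also have "\<dots> \<le> (c / real L) * (C * s) + c^2 * exp c * h"
      proof -
        have "c^2 * exp c * h / real L \<le> c^2 * exp c * h"
          proof -
          have "0 \<le> c^2 * exp c * h" using h0 by simp
          moreover have "(1::real) \<le> real L" using L by simp
          ultimately show ?thesis by (simp add: divide_le_eq mult_le_cancel_left1)
        qed  
        thus ?thesis by (simp add: add_divide_distrib)
      qed
      finally have P2: "C * (gL L (x + h) - gL L a) \<le> (c / real L) * (C * s) + c^2 * exp c * h" .
      have "C * (gL L (x + h) - ?u) = C * (gL L (x + h) - gL L a) + C * (gL L a - ?u)"
        by (simp add: algebra_simps)
      also have "\<dots> \<le> ?u + (c / real L) * (C * r + C * s) + K * h"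
        using P1 P2 by (simp add: K_def algebra_simps)
      also have "C * r + C * s = 1" using rs Ch by (metis distrib_left)
      moreover have "?u \<le> c * ?u" using c1 Gu0 by (simp add: mult_le_cancel_right1)
      ultimately show ?thesis by simp
    qed
  qed
  have Keq: "K = (2 + ln (real L)) * exp 1 + (ln (real L) + 1)^2 * exp (ln (real L) + 1)"
    by (simp add: K_def c_def algebra_simps)
  have "C * (gL L (x + 1/C) - ?u) \<le> c * ?u + c / real L + K / C"
    unfolding Kh h_def[symmetric] by (rule main)
  thus ?thesis unfolding Keq c_def .
qed

lemma gL_nonneg:
  assumes L: "L \<ge> 1" and x: "(x::real) \<ge> 0" shows "gL L x \<ge> 0"
proof -
  have "real L * (exp (1 / (ln (real L) + 1)) - 1) > 0" using gL_basics(4)[OF L] by simp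
  thus ?thesis using x by (simp add: gL_def)
qed

theorem lemma3:
  fixes L :: nat
  assumes "L \<ge> 1"
  shows "\<exists>B::real. \<forall>Ls lsrc ldst C ms i n k.
           finite Ls \<and> Ls \<noteq> {} \<and> (\<forall>l\<in>Ls. C l \<ge> 1) \<and>
           (\<forall>p\<in>set ms. pk_arr p \<ge> 1) \<and>
           (\<forall>p\<in>set ms. \<forall>k'\<in>valid_scheds Ls lsrc ldst p. card k' \<le> L) \<and>
           i < length ms \<and>
           alg_reach L Ls lsrc ldst C (take i ms) n \<and>
           k \<in> valid_scheds Ls lsrc ldst (ms ! i) \<and>
           (\<forall>k'\<in>valid_scheds Ls lsrc ldst (ms ! i). sched_value L C n k' \<le> sched_value L C n k) \<and>
           sched_value L C n k > 0
           \<longrightarrow> dual_increase L C n k \<le> 2 * (ln (real L) + 1) + B / real (Min (C ` Ls))"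
proof -
  define c where "c = ln (real L) + 1"
  define K where "K = (2 + ln (real L)) * exp 1 + (ln (real L) + 1)^2 * exp (ln (real L) + 1)"
  have c1: "c \<ge> 1" using assms by (simp add: c_def)
  have K0: "K \<ge> 0" using assms by (simp add: K_def)
  show ?thesis
  proof (rule exI[of _ "real L * K"], intro allI impI, elim conjE)
    fix Ls lsrc ldst C ms i n k
    assume fin: "finite Ls" and ne: "Ls \<noteq> {}" and Cpos: "\<forall>l\<in>Ls. C l \<ge> 1"
      and cardL: "\<forall>p\<in>set ms. \<forall>k'\<in>valid_scheds Ls lsrc ldst p. card k' \<le> L"
      and il: "i < length ms" and kv: "k \<in> valid_scheds Ls lsrc ldst (ms ! i)"
      and sv: "sched_value L C n k > 0"
    define Cm where "Cm = real (Min (C ` Ls))"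
    have Cm1: "Cm \<ge> 1" using fin ne Cpos by (simp add: Cm_def)
    have CmC: "Cm \<le> real (C l)" if "l \<in> Ls" for l using fin that by (simp add: Cm_def)
    obtain ls ts where kz: "k = set (zip ls ts)" and lsL: "set ls \<subseteq> Ls"
      using kv by (auto simp: valid_scheds_def is_dpath_def)
    have finK: "finite k" using kz by simp
    have kLs: "l \<in> Ls" if "(l, t) \<in> k" for l t
      using that kz lsL by (auto dest: set_zip_leftD)
    have ck: "card k \<le> L" using cardL il kv by auto
    define bt where "bt = (\<lambda>(l,t). beta L C n l t)"
    define S where "S = (\<Sum>p\<in>k. bt p)"
    have bt0: "bt p \<ge> 0" for p
      using gL_nonneg[OF assms] by (auto simp: bt_def beta_def split: prod.splits)
    have S1: "S < 1" using sv by (simp add: sched_value_def S_def bt_def)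
    have btS: "bt p \<le> S" if "p \<in> k" for p
      unfolding S_def using finK that bt0 by (intro member_le_sum) auto
    have tb: "(case p of (l, t) \<Rightarrow> real (C l) * (beta L C (incr n k) l t - beta L C n l t))
                \<le> c * bt p + c / real L + K / Cm" if "p \<in> k" for p
    proof -
      obtain l t where p: "p = (l, t)" by (cases p)
      have lL: "l \<in> Ls" using kLs that p by simp
      have Cl: "real (C l) \<ge> 1" using Cpos lL by simp
      define x where "x = real (n l t) / real (C l)"
      have inc: "beta L C (incr n k) l t = gL L (x + 1 / real (C l))"
        using that p Cl by (simp add: beta_def incr_def x_def add_divide_distrib add.commute)
      have bx: "beta L C n l t = gL L x" by (simp add: beta_def x_def)
      have gx1: "gL L x \<le> 1" using btS[OF that] S1 p bx by (simp add: bt_def)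
      have "real (C l) * (gL L (x + 1 / real (C l)) - gL L x) \<le> c * gL L x + c / real L + K / real (C l)"
        using step_bound[OF assms Cl _ gx1] by (simp add: x_def c_def K_def)
      also have "K / real (C l) \<le> K / Cm"
        using K0 CmC[OF lL] Cm1 by (intro divide_left_mono) auto
      finally show ?thesis using p inc bx by (simp add: bt_def)
    qed
    have "(\<Sum>(l,t)\<in>k. real (C l) * (beta L C (incr n k) l t - beta L C n l t))
          \<le> (\<Sum>p\<in>k. c * bt p + (c / real L + K / Cm))"
      by (rule sum_mono, drule tb, linarith)
    also have "\<dots> = c * S + real (card k) * (c / real L + K / Cm)"
      by (simp add: sum.distrib sum_distrib_left S_def)
    also have "\<dots> \<le> c * S + real L * (c / real L + K / Cm)"
      using ck c1 K0 Cm1 by (intro add_left_mono mult_right_mono) auto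
    also have "\<dots> = c * S + c + real L * K / Cm" using assms by (simp add: field_simps)
    finally have sumb: "(\<Sum>(l,t)\<in>k. real (C l) * (beta L C (incr n k) l t - beta L C n l t))
          \<le> c * S + c + real L * K / Cm" .
    have S0: "S \<ge> 0" unfolding S_def using bt0 by (simp add: sum_nonneg)
    have "(c - 1) * S \<le> (c - 1) * 1" using c1 S1 by (intro mult_left_mono) auto
    moreover have "dual_increase L C n k = 1 - S + (\<Sum>(l,t)\<in>k. real (C l) * (beta L C (incr n k) l t - beta L C n l t))"
      by (simp add: dual_increase_def sched_value_def S_def bt_def)
    ultimately have "dual_increase L C n k \<le> 2 * c + real L * K / Cm"
      using sumb by (simp add: algebra_simps)
    thus "dual_increase L C n k \<le> 2 * (ln (real L) + 1) + real L * K / real (Min (C ` Ls))"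
      by (simp add: c_def Cm_def)
  qed
qed

end
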